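(* Let $W$ be a standard Brownian motion and let $f$ be a non-decreasing càdlàg function on $[-1,\infty)$. For $t>0$ set $A_t:=\{\inf_{0\le s\le t}(W_s-f_s)=0\}$. Then $\mathbb{P}(A_t)=0$ for all $t>0$. *)

theory Defs
  imports "HOL-Probability.Probability"
begin

definition std_BM :: "'a measure \<Rightarrow> (real \<Rightarrow> 'a \<Rightarrow> real) \<Rightarrow> bool" where
  "std_BM M W \<longleftrightarrow>
     prob_space M \<and>
     (\<forall>t\<ge>0. W t \<in> borel_measurable M) \<and>
     (\<forall>\<omega>\<in>space M. W 0 \<omega> = 0) \<and>
     (\<forall>\<omega>\<in>space M. continuous_on {0..} (\<lambda>t. W t \<omega>)) \<and>
     (\<forall>s t. 0 \<le> s \<longrightarrow> s < t \<longrightarrow>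
        distributed M lborel (\<lambda>\<omega>. W t \<omega> - W s \<omega>) (\<lambda>x. ennreal (normal_density 0 (sqrt (t - s)) x))) \<and>
     (\<forall>ts. sorted_wrt (<) ts \<longrightarrow> (\<forall>t\<in>set ts. 0 \<le> t) \<longrightarrow>
        prob_space.indep_vars M (\<lambda>_. borel) (\<lambda>i \<omega>. W (ts ! Suc i) \<omega> - W (ts ! i) \<omega>) {..<length ts - 1})"

text \<open>Cadlag on S: right-continuous at every point of S, with left limits at every
  point of S (vacuous where S has no points to the left).\<close>
definition cadlag_on :: "real set \<Rightarrow> (real \<Rightarrow> real) \<Rightarrow> bool" where
  "cadlag_on S f \<longleftrightarrow>
     (\<forall>x\<in>S. (f \<longlongrightarrow> f x) (at x within (S \<inter> {x<..}))) \<and>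
     (\<forall>x\<in>S. \<exists>l. (f \<longlongrightarrow> l) (at x within (S \<inter> {..<x})))"

end

theory Submission
  imports Defs
begin
lemma lemG:
  assumes P: "prob_space M"
  and ind: "prob_space.indep_var M borel X borel Z"
  and D: "distributed M lborel X (\<lambda>x. ennreal (g x))"
  and gC: "\<And>x. g x \<le> C" and C: "0 \<le> C" and e: "0 \<le> \<epsilon>"
  shows "emeasure M {\<omega>\<in>space M. \<bar>X \<omega> + Z \<omega>\<bar> \<le> \<epsilon>} \<le> ennreal (2*\<epsilon>*C)"
proof -
  interpret prob_space M by (rule P)
  have rvX[measurable]: "X \<in> borel_measurable M" using ind by (rule indep_var_rv1)
  have rvZ[measurable]: "Z \<in> borel_measurable M" using ind by (rule indep_var_rv2)
  have eq: "distr M borel X \<Otimes>\<^sub>M distr M borel Z = distr M (borel \<Otimes>\<^sub>M borel) (\<lambda>\<omega>. (X \<omega>, Z \<omega>))"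
    using ind indep_var_distribution_eq by blast
  define S where "S = {p \<in> space (borel \<Otimes>\<^sub>M borel). \<bar>fst p + snd p\<bar> \<le> (\<epsilon>::real)}"
  have S: "S \<in> sets (borel \<Otimes>\<^sub>M borel)" unfolding S_def by measurable
  have "{\<omega>\<in>space M. \<bar>X \<omega> + Z \<omega>\<bar> \<le> \<epsilon>} = (\<lambda>\<omega>. (X \<omega>, Z \<omega>)) -` S \<inter> space M"
    by (auto simp: S_def space_pair_measure)
  also have "emeasure M \<dots> = emeasure (distr M (borel \<Otimes>\<^sub>M borel) (\<lambda>\<omega>. (X \<omega>, Z \<omega>))) S"
    using S by (subst emeasure_distr) auto
  also have "\<dots> = emeasure (distr M borel X \<Otimes>\<^sub>M distr M borel Z) S" by (simp add: eq)
  also have "\<dots> = (\<integral>\<^sup>+z. emeasure (distr M borel X) ((\<lambda>x. (x, z)) -` S) \<partial>distr M borel Z)"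
  proof -
    interpret PX: prob_space "distr M borel X" by (rule prob_space_distr) simp
    interpret PZ: prob_space "distr M borel Z" by (rule prob_space_distr) simp
    interpret pair_sigma_finite "distr M borel X" "distr M borel Z" ..
    have S': "S \<in> sets (distr M borel X \<Otimes>\<^sub>M distr M borel Z)"
      using S by (metis sets_distr sets_pair_measure_cong)
    show ?thesis using S' by (rule emeasure_pair_measure_alt2)
  qed
  also have "\<dots> \<le> (\<integral>\<^sup>+z. ennreal (2*\<epsilon>*C) \<partial>distr M borel Z)"
  proof (rule nn_integral_mono)
    fix z :: real
    have "(\<lambda>x. (x, z)) -` S = {-z-\<epsilon>..\<epsilon>-z}" by (auto simp: S_def space_pair_measure)
    then have "emeasure (distr M borel X) ((\<lambda>x. (x, z)) -` S) = emeasure M (X -` {-z-\<epsilon>..\<epsilon>-z} \<inter> space M)"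
      by (simp add: emeasure_distr)
    also have "\<dots> = (\<integral>\<^sup>+x. ennreal (g x) * indicator {-z-\<epsilon>..\<epsilon>-z} x \<partial>lborel)"
      using D by (rule distributed_emeasure) simp
    also have "\<dots> \<le> (\<integral>\<^sup>+x. ennreal C * indicator {-z-\<epsilon>..\<epsilon>-z} x \<partial>lborel)"
      by (intro nn_integral_mono mult_right_mono ennreal_leI gC) auto
    also have "\<dots> = ennreal C * ennreal (2*\<epsilon>)"
      using e by (simp add: nn_integral_cmult)
    also have "\<dots> = ennreal (2*\<epsilon>*C)" using C e by (simp add: ennreal_mult[symmetric] mult_ac)
    finally show "emeasure (distr M borel X) ((\<lambda>x. (x, z)) -` S) \<le> ennreal (2*\<epsilon>*C)" .
  qed
  also have "\<dots> = ennreal (2*\<epsilon>*C)"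
  proof -
    interpret PZ: prob_space "distr M borel Z" by (rule prob_space_distr) simp
    show ?thesis using PZ.emeasure_space_1 by simp
  qed
  finally show ?thesis .
qed

lemma emeas_to_meas:
  assumes "finite_measure M" "emeasure M A \<le> ennreal c" "0 \<le> c"
  shows "measure M A \<le> c"
  using assms by (metis finite_measure.emeasure_eq_measure ennreal_le_iff)

lemma normal_density_le:
  assumes "0 < \<sigma>" shows "normal_density 0 \<sigma> x \<le> 1 / \<sigma>"
proof -
  have "sqrt (2 * pi * \<sigma>\<^sup>2) = sqrt (2*pi) * \<sigma>" using assms
    by (simp add: real_sqrt_mult)
  moreover have "1 \<le> sqrt (2*pi)" using pi_gt3 by simp
  ultimately have "1 / sqrt (2 * pi * \<sigma>\<^sup>2) \<le> 1 / \<sigma>" using assms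
    by (simp add: divide_simps)
  moreover have "exp (-(x - 0)\<^sup>2/ (2 * \<sigma>\<^sup>2)) \<le> 1" by simp
  ultimately show ?thesis unfolding normal_density_def
    by (smt (verit, best) divide_nonneg_nonneg exp_gt_zero mult_left_le real_sqrt_ge_zero
        zero_le_power2 mult_nonneg_nonneg pi_ge_zero)
qed

lemma emeasure_interval_density_le:
  assumes D: "distributed M lborel X (\<lambda>x. ennreal (g x))" and gC: "\<And>x. g x \<le> C" and C: "0 \<le> C"
    and ab: "a \<le> b"
  shows "emeasure M (X -` {a..b} \<inter> space M) \<le> ennreal ((b - a) * C)"
proof -
  have "emeasure M (X -` {a..b} \<inter> space M) = (\<integral>\<^sup>+x. ennreal (g x) * indicator {a..b} x \<partial>lborel)"
    using D by (rule distributed_emeasure) simp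
  also have "\<dots> \<le> (\<integral>\<^sup>+x. ennreal C * indicator {a..b} x \<partial>lborel)"
    by (intro nn_integral_mono mult_right_mono ennreal_leI gC) auto
  also have "\<dots> = ennreal C * ennreal (b - a)"
    using ab by (simp add: nn_integral_cmult)
  also have "\<dots> = ennreal ((b - a) * C)" using C ab by (simp add: ennreal_mult[symmetric] mult_ac)
  finally show ?thesis .
qed

lemma normal_half_bound:
  assumes P: "prob_space M" and D: "distributed M lborel X (\<lambda>x. ennreal (normal_density 0 \<sigma> x))"
    and s: "0 < \<sigma>" and a: "0 \<le> a"
  shows "measure M {\<omega>\<in>space M. -a \<le> X \<omega>} \<le> 1/2 + a / \<sigma>"
proof -
  interpret prob_space M by (rule P)
  let ?g = "normal_density 0 \<sigma>"
  have Xm[measurable]: "X \<in> borel_measurable M"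
    using distributed_measurable[OF D] by simp
  have e1: "{\<omega>\<in>space M. -a \<le> X \<omega>} = X -` {-a..} \<inter> space M" by auto
  have e2: "{\<omega>\<in>space M. X \<omega> \<le> a} = X -` {..a} \<inter> space M" by auto
  have "emeasure M {\<omega>\<in>space M. X \<omega> \<le> a} = (\<integral>\<^sup>+x. ennreal (?g x) * indicator {..a} x \<partial>lborel)"
    unfolding e2 using D by (rule distributed_emeasure) simp
  also have "\<dots> = (\<integral>\<^sup>+x. ennreal (?g (0 + (-1) * x)) * indicator {..a} (0 + (-1) * x) \<partial>lborel)"
    by (subst nn_integral_real_affine[where c="-1" and t=0]) auto
  also have "\<dots> = (\<integral>\<^sup>+x. ennreal (?g x) * indicator {-a..} x \<partial>lborel)"
    by (intro nn_integral_cong) (auto simp: normal_density_def indicator_def)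
  also have "\<dots> = emeasure M {\<omega>\<in>space M. -a \<le> X \<omega>}"
    unfolding e1 using D by (intro distributed_emeasure[symmetric]) simp_all
  finally have sym: "measure M {\<omega>\<in>space M. X \<omega> \<le> a} = measure M {\<omega>\<in>space M. -a \<le> X \<omega>}"
    by (simp add: measure_def)
  have un: "{\<omega>\<in>space M. -a \<le> X \<omega>} \<union> {\<omega>\<in>space M. X \<omega> \<le> a} = space M" using a by auto
  have int: "{\<omega>\<in>space M. -a \<le> X \<omega>} \<inter> {\<omega>\<in>space M. X \<omega> \<le> a} = X -` {-a..a} \<inter> space M" by auto
  have "emeasure M (X -` {-a..a} \<inter> space M) \<le> ennreal ((a - -a) * (1/\<sigma>))"
    using a s by (intro emeasure_interval_density_le[OF D] normal_density_le) auto
  then have b: "measure M (X -` {-a..a} \<inter> space M) \<le> 2 * a / \<sigma>"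
    using a s by (intro emeas_to_meas) (auto simp: finite_measure_axioms)
  have "measure M (space M) = measure M {\<omega>\<in>space M. -a \<le> X \<omega>} + measure M {\<omega>\<in>space M. X \<omega> \<le> a}
      - measure M (X -` {-a..a} \<inter> space M)"
    by (subst un[symmetric], subst measure_Un3) (auto simp: int fmeasurable_def less_top[symmetric])
  then show ?thesis using sym b prob_space by (simp add: field_simps)
qed

lemma normal_tail_bound:
  assumes P: "prob_space M" and D: "distributed M lborel X (\<lambda>x. ennreal (normal_density 0 \<sigma> x))"
    and s: "0 < \<sigma>" and a: "0 < a"
  shows "measure M {\<omega>\<in>space M. a < X \<omega>} \<le> \<sigma>\<^sup>2 / a\<^sup>2"
proof -
  interpret prob_space M by (rule P)
  have Xm[measurable]: "X \<in> borel_measurable M"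
    using distributed_measurable[OF D] by simp
  have int: "integrable M (\<lambda>x. X x ^ 2)"
  proof -
    have "integrable lborel (\<lambda>x. normal_density 0 \<sigma> x * x^2)"
      using integrable_normal_moment[where \<mu>=0 and \<sigma>=\<sigma> and k=2] s by simp
    then show ?thesis using distributed_integrable[OF D, of "\<lambda>x. x^2"] by simp
  qed
  have E: "expectation X = 0" using normal_distributed_expectation[OF s D] .
  have V: "variance X = \<sigma>\<^sup>2" using normal_distributed_variance[OF s D] .
  have "measure M {\<omega>\<in>space M. a < X \<omega>} \<le> measure M {x\<in>space M. \<bar>X x - expectation X\<bar> \<ge> a}"
    by (intro finite_measure_mono) (auto simp: E)
  also have "\<dots> \<le> variance X / a\<^sup>2" by (rule Chebyshev_inequality) (use int a in auto)
  finally show ?thesis using V by simp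
qed

definition grid :: "real \<Rightarrow> real \<Rightarrow> nat \<Rightarrow> nat \<Rightarrow> real" where
  "grid t \<delta> m k = \<delta> + (t - \<delta>) * real k / 2^m"

definition Ymin :: "(real \<Rightarrow> 'a \<Rightarrow> real) \<Rightarrow> (real \<Rightarrow> real) \<Rightarrow> real \<Rightarrow> real \<Rightarrow> nat \<Rightarrow> 'a \<Rightarrow> real" where
  "Ymin W f t \<delta> m \<omega> = Min ((\<lambda>k. W (grid t \<delta> m k) \<omega> - f (grid t \<delta> m k)) ` {..2^m})"

definition Finf :: "(real \<Rightarrow> 'a \<Rightarrow> real) \<Rightarrow> (real \<Rightarrow> real) \<Rightarrow> real \<Rightarrow> real \<Rightarrow> 'a \<Rightarrow> real" where
  "Finf W f t \<delta> \<omega> = (INF s\<in>{\<delta>..t}. W s \<omega> - f s)"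

lemma grid_in: "0 \<le> \<delta> \<Longrightarrow> \<delta> \<le> t \<Longrightarrow> k \<le> 2^m \<Longrightarrow> grid t \<delta> m k \<in> {\<delta>..t}"
proof -
  assume a: "0 \<le> \<delta>" "\<delta> \<le> t" "k \<le> 2^m"
  have k: "real k \<le> 2^m" using a(3) by (metis of_nat_le_iff of_nat_numeral of_nat_power)
  have "(t - \<delta>) * real k \<le> (t - \<delta>) * 2^m" using a k by (intro mult_left_mono) auto
  then have "(t - \<delta>) * real k / 2^m \<le> t - \<delta>" by (simp add: pos_divide_le_eq)
  moreover have "0 \<le> (t - \<delta>) * real k / 2^m" using a by simp
  ultimately show ?thesis unfolding grid_def by auto
qed

lemma grid_refine: "m \<le> m' \<Longrightarrow> grid t \<delta> m' (k * 2^(m'-m)) = grid t \<delta> m k"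
proof -
  assume "m \<le> m'"
  then have "(2::real)^m' = 2^m * 2^(m'-m)" by (simp add: power_add[symmetric])
  then show ?thesis unfolding grid_def by (simp add: field_simps)
qed

context
  fixes M :: "'a measure" and W :: "real \<Rightarrow> 'a \<Rightarrow> real" and f :: "real \<Rightarrow> real" and t :: real
  assumes BM: "std_BM M W" and mono: "mono_on {-1..} f" and cad: "cadlag_on {-1..} f" and tpos: "0 < t"
begin

lemma P: "prob_space M" using BM by (simp add: std_BM_def)
lemma Wm: "0 \<le> s \<Longrightarrow> W s \<in> borel_measurable M" using BM by (simp add: std_BM_def)
lemma W0: "\<omega> \<in> space M \<Longrightarrow> W 0 \<omega> = 0" using BM by (simp add: std_BM_def)
lemma Wc: "\<omega> \<in> space M \<Longrightarrow> continuous_on {0..} (\<lambda>s. W s \<omega>)" using BM by (simp add: std_BM_def)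
lemma Wd: "0 \<le> s \<Longrightarrow> s < u \<Longrightarrow>
  distributed M lborel (\<lambda>\<omega>. W u \<omega> - W s \<omega>) (\<lambda>x. ennreal (normal_density 0 (sqrt (u - s)) x))"
  using BM by (simp add: std_BM_def)
lemma Wi: "sorted_wrt (<) ts \<Longrightarrow> (\<forall>x\<in>set ts. 0 \<le> x) \<Longrightarrow>
  prob_space.indep_vars M (\<lambda>_. borel) (\<lambda>i \<omega>. W (ts ! Suc i) \<omega> - W (ts ! i) \<omega>) {..<length ts - 1}"
  using BM by (simp add: std_BM_def)

lemma bdd: assumes "\<omega> \<in> space M" "0 \<le> \<delta>" shows "bdd_below ((\<lambda>s. W s \<omega> - f s) ` {\<delta>..t})"
proof -
  have "continuous_on {\<delta>..t} (\<lambda>s. W s \<omega>)"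
    by (rule continuous_on_subset[OF Wc[OF assms(1)]]) (use assms(2) in auto)
  then have "compact ((\<lambda>s. W s \<omega>) ` {\<delta>..t})" by (rule compact_continuous_image) simp
  then have "bdd_below ((\<lambda>s. W s \<omega>) ` {\<delta>..t})" by (intro bounded_imp_bdd_below compact_imp_bounded)
  then obtain B where B0: "\<forall>s\<in>{\<delta>..t}. B \<le> W s \<omega>" by (auto simp: bdd_below_def)
  then have B: "\<And>s. s \<in> {\<delta>..t} \<Longrightarrow> B \<le> W s \<omega>" by blast
  have "\<And>s. s \<in> {\<delta>..t} \<Longrightarrow> f s \<le> f t"
    using assms(2) by (intro mono_onD[OF mono]) auto
  then have "\<And>s. s \<in> {\<delta>..t} \<Longrightarrow> B - f t \<le> W s \<omega> - f s" using B by fastforce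
  then show ?thesis unfolding bdd_below_def by (intro exI[of _ "B - f t"]) auto
qed

lemma rc: assumes "\<omega> \<in> space M" "0 \<le> s"
  shows "((\<lambda>u. W u \<omega> - f u) \<longlongrightarrow> W s \<omega> - f s) (at_right s)"
proof -
  have "(f \<longlongrightarrow> f s) (at s within ({-1..} \<inter> {s<..}))"
    using cad assms(2) by (auto simp: cadlag_on_def)
  moreover have "{-1..} \<inter> {s<..} = {s<..}" using assms(2) by auto
  ultimately have 1: "(f \<longlongrightarrow> f s) (at_right s)" by simp
  have "((\<lambda>u. W u \<omega>) \<longlongrightarrow> W s \<omega>) (at s within {0..})"
    using Wc[OF assms(1)] assms(2) by (simp add: continuous_on_def)
  then have 2: "((\<lambda>u. W u \<omega>) \<longlongrightarrow> W s \<omega>) (at_right s)"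
    by (rule tendsto_within_subset) (use assms(2) in auto)
  show ?thesis using 1 2 by (intro tendsto_diff)
qed

lemma Y_ge: assumes "\<omega> \<in> space M" "0 \<le> \<delta>" "\<delta> \<le> t" shows "Finf W f t \<delta> \<omega> \<le> Ymin W f t \<delta> m \<omega>"
proof -
  let ?S = "(\<lambda>k. W (grid t \<delta> m k) \<omega> - f (grid t \<delta> m k)) ` {..2^m}"
  have "Min ?S \<in> ?S" by (intro Min_in) auto
  then obtain k where k: "k \<le> 2^m" "Min ?S = W (grid t \<delta> m k) \<omega> - f (grid t \<delta> m k)" by blast
  show ?thesis unfolding Ymin_def Finf_def k(2)
    by (rule cINF_lower[OF bdd[OF assms(1,2)]]) (rule grid_in[OF assms(2,3) k(1)])
qed

lemma Y_mono: assumes "m \<le> m'" shows "Ymin W f t \<delta> m' \<omega> \<le> Ymin W f t \<delta> m \<omega>"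
  unfolding Ymin_def
proof (rule Min_antimono)
  show "(\<lambda>k. W (grid t \<delta> m k) \<omega> - f (grid t \<delta> m k)) ` {..2^m}
      \<subseteq> (\<lambda>k. W (grid t \<delta> m' k) \<omega> - f (grid t \<delta> m' k)) ` {..2^m'}"
  proof
    fix y assume "y \<in> (\<lambda>k. W (grid t \<delta> m k) \<omega> - f (grid t \<delta> m k)) ` {..2^m}"
    then obtain k where k: "k \<le> 2^m" "y = W (grid t \<delta> m k) \<omega> - f (grid t \<delta> m k)" by auto
    have "k * 2^(m'-m) \<le> 2^m * 2^(m'-m)" using k(1) by simp
    also have "\<dots> = (2::nat)^m'" using assms by (simp add: power_add[symmetric])
    finally show "y \<in> (\<lambda>k. W (grid t \<delta> m' k) \<omega> - f (grid t \<delta> m' k)) ` {..2^m'}"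
      using k(2) grid_refine[OF assms, of t \<delta> k] by (intro image_eqI[where x="k * 2^(m'-m)"]) auto
  qed
qed auto

lemma Y_conv: assumes "\<omega> \<in> space M" "0 \<le> \<delta>" "\<delta> < t"
  shows "(\<lambda>m. Ymin W f t \<delta> m \<omega>) \<longlonglongrightarrow> Finf W f t \<delta> \<omega>"
proof (rule LIMSEQ_I)
  fix e :: real assume e: "0 < e"
  let ?h = "\<lambda>s. W s \<omega> - f s"
  let ?F = "Finf W f t \<delta> \<omega>"
  have ne: "{\<delta>..t} \<noteq> {}" using assms by simp
  have "(INF s\<in>{\<delta>..t}. ?h s) < ?F + e/2" using e by (simp add: Finf_def)
  then have "\<exists>x\<in>{\<delta>..t}. ?h x < ?F + e/2"
    by (rule cINF_less_iff[OF ne bdd[OF assms(1,2)], THEN iffD1])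
  then obtain s where s: "s \<in> {\<delta>..t}" "?h s < ?F + e/2" by blast
  have "\<exists>m0. Ymin W f t \<delta> m0 \<omega> < ?F + e"
  proof (cases "s = t")
    case True
    have "Ymin W f t \<delta> 0 \<omega> \<le> ?h (grid t \<delta> 0 1)" unfolding Ymin_def by (intro Min_le) auto
    also have "grid t \<delta> 0 1 = t" by (simp add: grid_def)
    finally have "Ymin W f t \<delta> 0 \<omega> \<le> ?h t" .
    then show ?thesis using s True e by (intro exI[of _ 0]) simp
  next
    case False
    then have st: "s < t" using s by auto
    have s0: "0 \<le> s" using s assms by simp
    have "((\<lambda>u. ?h u) \<longlongrightarrow> ?h s) (at_right s)" by (rule rc[OF assms(1) s0])
    then have "\<forall>\<^sub>F u in at_right s. dist (?h u) (?h s) < e/2"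
      by (rule tendstoD) (use e in simp)
    then obtain b where b: "b > s" "\<And>u. u > s \<Longrightarrow> u < b \<Longrightarrow> dist (?h u) (?h s) < e/2"
      unfolding eventually_at_right_field by blast
    define \<eta> where "\<eta> = min (b - s) (t - s)"
    have eta: "0 < \<eta>" using b st by (simp add: \<eta>_def)
    obtain m where m: "(t - \<delta>) / \<eta> < 2^m" using real_arch_pow[of 2 "(t - \<delta>) / \<eta>"] by auto
    have "t - \<delta> < 2^m * \<eta>" using m by (simp add: pos_divide_less_eq[OF eta])
    then have mesh: "(t - \<delta>) / 2^m < \<eta>" by (simp add: pos_divide_less_eq mult.commute)
    have td: "0 < t - \<delta>" using assms by simp
    define q where "q = (s - \<delta>) * 2^m / (t - \<delta>)"
    have q0: "0 \<le> q" using s td by (simp add: q_def)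
    define k where "k = nat \<lceil>q\<rceil>"
    have c0: "0 \<le> \<lceil>q\<rceil>" using q0 by simp
    have kk: "real k = real_of_int \<lceil>q\<rceil>" unfolding k_def using c0 by simp
    have k1: "q \<le> real k" using kk ceiling_correct[of q] by linarith
    have k2: "real k < q + 1" using kk ceiling_correct[of q] by linarith
    have qeq: "(t - \<delta>) * q / 2^m = s - \<delta>" using td by (simp add: q_def field_simps)
    have "(t - \<delta>) * q / 2^m \<le> (t - \<delta>) * real k / 2^m"
      using k1 td by (intro divide_right_mono mult_left_mono) auto
    then have g1: "s \<le> grid t \<delta> m k" unfolding grid_def using qeq by simp
    have "(t - \<delta>) * real k / 2^m < (t - \<delta>) * (q + 1) / 2^m"
      using k2 td by (intro divide_strict_right_mono mult_strict_left_mono) auto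
    also have "(t - \<delta>) * (q + 1) / 2^m = s - \<delta> + (t - \<delta>) / 2^m"
      by (simp add: distrib_left add_divide_distrib qeq)
    finally have g2: "grid t \<delta> m k < s + (t - \<delta>) / 2^m" unfolding grid_def by simp
    have g3: "grid t \<delta> m k < s + \<eta>" using g2 mesh by simp
    have "grid t \<delta> m k \<le> t" using g3 by (simp add: \<eta>_def)
    then have "(t - \<delta>) * real k / 2^m \<le> (t - \<delta>) * 1" unfolding grid_def by simp
    then have "(t - \<delta>) * real k \<le> (t - \<delta>) * 2^m" by (simp add: pos_divide_le_eq)
    then have "real k \<le> 2^m" using td by simp
    then have kle: "k \<le> 2^m" by (metis of_nat_le_iff of_nat_numeral of_nat_power)
    have "?h (grid t \<delta> m k) < ?F + e"
    proof (cases "grid t \<delta> m k = s")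
      case True then show ?thesis using s e by simp
    next
      case False
      then have "grid t \<delta> m k > s" "grid t \<delta> m k < b" using g1 g3 by (auto simp: \<eta>_def)
      then have "dist (?h (grid t \<delta> m k)) (?h s) < e/2" by (rule b(2))
      then show ?thesis unfolding dist_real_def abs_less_iff using s(2) by linarith
    qed
    moreover have "Ymin W f t \<delta> m \<omega> \<le> ?h (grid t \<delta> m k)" unfolding Ymin_def using kle by (intro Min_le) auto
    ultimately show ?thesis by (intro exI[of _ m]) simp
  qed
  then obtain m0 where m0: "Ymin W f t \<delta> m0 \<omega> < ?F + e" by auto
  show "\<exists>no. \<forall>n\<ge>no. norm (Ymin W f t \<delta> n \<omega> - ?F) < e"
  proof (intro exI[of _ m0] allI impI)
    fix n assume "m0 \<le> n"
    then have "Ymin W f t \<delta> n \<omega> \<le> Ymin W f t \<delta> m0 \<omega>" by (rule Y_mono)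
    moreover have "?F \<le> Ymin W f t \<delta> n \<omega>" using Y_ge assms by simp
    ultimately show "norm (Ymin W f t \<delta> n \<omega> - ?F) < e" using m0 by simp
  qed
qed

lemma Y_meas: assumes "0 \<le> \<delta>" "\<delta> \<le> t" shows "Ymin W f t \<delta> m \<in> borel_measurable M"
proof -
  have "(\<lambda>\<omega>. Min ((\<lambda>k. W (grid t \<delta> m k) \<omega> - f (grid t \<delta> m k)) ` {..2^m})) \<in> borel_measurable M"
    using grid_in[OF assms] assms(1) by (intro borel_measurable_Min borel_measurable_diff Wm) force+
  then show ?thesis unfolding Ymin_def[abs_def] by simp
qed

lemma F_meas: assumes "0 \<le> \<delta>" "\<delta> < t" shows "Finf W f t \<delta> \<in> borel_measurable M"
proof (rule borel_measurable_LIMSEQ_real[where u="\<lambda>m. Ymin W f t \<delta> m"])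
  show "\<And>x. x \<in> space M \<Longrightarrow> (\<lambda>i. Ymin W f t \<delta> i x) \<longlonglongrightarrow> Finf W f t \<delta> x"
    using Y_conv assms by blast
  show "\<And>i. Ymin W f t \<delta> i \<in> borel_measurable M" using Y_meas assms by simp
qed

end

context
  fixes M :: "'a measure" and W :: "real \<Rightarrow> 'a \<Rightarrow> real" and f :: "real \<Rightarrow> real" and t :: real
  assumes BM: "std_BM M W" and mono: "mono_on {-1..} f" and cad: "cadlag_on {-1..} f" and tpos: "0 < t"
begin

lemma chain:
  assumes K: "0 < K" and r: "0 < r" "r < 1"
  shows "measure M (\<Inter>j\<in>{..K}. {\<omega>\<in>space M. 0 \<le> W (t * r^(K-j)) \<omega>}) \<le> (3/4)^K + K * (16 * r / (1 - r))"
proof -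
  interpret prob_space M by (rule P[OF BM mono cad tpos])
  define \<tau> where "\<tau> j = t * r^(K-j)" for j
  have tau_pos: "0 < \<tau> j" for j using tpos r by (simp add: \<tau>_def)
  have tau_rel: "\<tau> j = r * \<tau> (Suc j)" if "j < K" for j
  proof -
    have "K - j = Suc (K - Suc j)" using that by simp
    then show ?thesis by (simp add: \<tau>_def)
  qed
  have tau_inc: "\<tau> i < \<tau> j" if "i < j" "j \<le> K" for i j
  proof -
    have "r^(K-i) < r^(K-j)" using that r by (intro power_strict_decreasing) auto
    then show ?thesis using tpos by (simp add: \<tau>_def)
  qed
  define I where "I j \<omega> = W (\<tau> (Suc j)) \<omega> - W (\<tau> j) \<omega>" for j \<omega>
  have Wm'[measurable]: "\<And>j. W (\<tau> j) \<in> borel_measurable M"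
    using Wm[OF BM mono cad tpos] tau_pos by (simp add: less_imp_le)
  have Im[measurable]: "\<And>j. I j \<in> borel_measurable M" unfolding I_def[abs_def] by measurable
  define ts where "ts = map \<tau> [0..<Suc K]"
  have len: "length ts = Suc K" by (simp add: ts_def)
  have nth: "ts ! i = \<tau> i" if "i < Suc K" for i using that by (simp add: ts_def del: upt_Suc)
  have sorted: "sorted_wrt (<) ts"
    unfolding sorted_wrt_iff_nth_less len using nth tau_inc by auto
  have nonneg: "\<forall>x\<in>set ts. 0 \<le> x" using tau_pos by (auto simp: ts_def less_imp_le)
  have ind0: "indep_vars (\<lambda>_. borel) (\<lambda>i \<omega>. W (ts ! Suc i) \<omega> - W (ts ! i) \<omega>) {..<length ts - 1}"
    by (rule Wi[OF BM mono cad tpos sorted nonneg])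
  have ind: "indep_vars (\<lambda>_. borel) I {..<K}"
    using ind0 by (subst (asm) indep_vars_cong[where J="{..<K}" and Y=I and N'="\<lambda>_. borel"])
      (auto simp: len nth I_def fun_eq_iff)
  define \<sigma> where "\<sigma> j = sqrt (\<tau> (Suc j) - \<tau> j)" for j
  define a where "a j = \<sigma> j / 4" for j
  have sig_pos: "0 < \<sigma> j" if "j < K" for j using tau_inc[of j "Suc j"] that by (simp add: \<sigma>_def)
  let ?E = "\<Inter>j\<in>{..K}. {\<omega>\<in>space M. 0 \<le> W (t * r^(K-j)) \<omega>}"
  let ?A = "\<Inter>j\<in>{..<K}. I j -` {-a j..} \<inter> space M"
  let ?B = "\<Union>j\<in>{..<K}. {\<omega>\<in>space M. a j < W (\<tau> j) \<omega>}"
  have sub: "?E \<subseteq> ?A \<union> ?B"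
  proof
    fix \<omega> assume w: "\<omega> \<in> ?E"
    then have w0: "\<omega> \<in> space M" using K by auto
    have wj: "0 \<le> W (\<tau> j) \<omega>" if "j \<le> K" for j using w that by (auto simp: \<tau>_def)
    show "\<omega> \<in> ?A \<union> ?B"
    proof (cases "\<exists>j<K. a j < W (\<tau> j) \<omega>")
      case True then show ?thesis using w0 by auto
    next
      case False
      have "-a j \<le> I j \<omega>" if "j < K" for j
      proof -
        have "W (\<tau> j) \<omega> \<le> a j" using False that not_less by blast
        moreover have "0 \<le> W (\<tau> (Suc j)) \<omega>" using wj[of "Suc j"] that by simp
        ultimately show ?thesis by (simp add: I_def)
      qed
      then show ?thesis using w0 by auto
    qed
  qed
  have A_eq: "prob ?A = (\<Prod>j\<in>{..<K}. prob (I j -` {-a j..} \<inter> space M))"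
    using K by (intro indep_varsD[OF ind]) auto
  have A_le: "prob ?A \<le> (3/4)^K"
  proof -
    have "(\<Prod>j\<in>{..<K}. prob (I j -` {-a j..} \<inter> space M)) \<le> (\<Prod>j\<in>{..<K}. 3/4)"
    proof (rule prod_mono)
      fix j assume j: "j \<in> {..<K}"
      have D: "distributed M lborel (I j) (\<lambda>x. ennreal (normal_density 0 (\<sigma> j) x))"
        unfolding I_def[abs_def] \<sigma>_def using tau_pos[of j] tau_inc[of j "Suc j"] j
        by (intro Wd[OF BM mono cad tpos]) (auto simp: less_imp_le)
      have "I j -` {-a j..} \<inter> space M = {\<omega>\<in>space M. - a j \<le> I j \<omega>}" by auto
      also have "prob \<dots> \<le> 1/2 + a j / \<sigma> j"
        using sig_pos[of j] j by (intro normal_half_bound[OF prob_space_axioms D]) (auto simp: a_def)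
      also have "\<dots> = 3/4" using sig_pos[of j] j by (simp add: a_def)
      finally show "0 \<le> prob (I j -` {-a j..} \<inter> space M) \<and> prob (I j -` {-a j..} \<inter> space M) \<le> 3/4"
        by simp
    qed
    then show ?thesis using A_eq by simp
  qed
  have B_le: "prob ?B \<le> K * (16 * r / (1 - r))"
  proof -
    have "prob ?B \<le> (\<Sum>j\<in>{..<K}. prob {\<omega>\<in>space M. a j < W (\<tau> j) \<omega>})"
      by (intro finite_measure_subadditive_finite) auto
    also have "\<dots> \<le> (\<Sum>j\<in>{..<K}. 16 * r / (1 - r))"
    proof (rule sum_mono)
      fix j assume j: "j \<in> {..<K}"
      have D: "distributed M lborel (\<lambda>\<omega>. W (\<tau> j) \<omega> - W 0 \<omega>) (\<lambda>x. ennreal (normal_density 0 (sqrt (\<tau> j - 0)) x))"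
        using tau_pos[of j] by (intro Wd[OF BM mono cad tpos]) auto
      have "{\<omega>\<in>space M. a j < W (\<tau> j) \<omega>} = {\<omega>\<in>space M. a j < W (\<tau> j) \<omega> - W 0 \<omega>}"
        using W0[OF BM mono cad tpos] by auto
      also have "prob \<dots> \<le> (sqrt (\<tau> j - 0))\<^sup>2 / (a j)\<^sup>2"
        using sig_pos[of j] j tau_pos[of j]
        by (intro normal_tail_bound[OF prob_space_axioms D]) (auto simp: a_def)
      also have "\<dots> = 16 * \<tau> j / (\<tau> (Suc j) - \<tau> j)"
        using tau_pos[of j] tau_inc[of j "Suc j"] j
        by (simp add: a_def \<sigma>_def power_divide)
      also have "\<dots> = 16 * r / (1 - r)"
        using tau_rel[of j] j tau_pos[of "Suc j"] r by (simp add: field_simps)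
      finally show "prob {\<omega>\<in>space M. a j < W (\<tau> j) \<omega>} \<le> 16 * r / (1 - r)" .
    qed
    also have "\<dots> = K * (16 * r / (1 - r))" by simp
    finally show ?thesis .
  qed
  have "prob ?E \<le> prob (?A \<union> ?B)"
    using sub K by (intro finite_measure_mono) auto
  also have "\<dots> \<le> prob ?A + prob ?B" using K by (intro measure_Un_le) auto
  finally show ?thesis using A_le B_le by simp
qed

end

context
  fixes M :: "'a measure" and W :: "real \<Rightarrow> 'a \<Rightarrow> real" and f :: "real \<Rightarrow> real" and t :: real
  assumes BM: "std_BM M W" and mono: "mono_on {-1..} f" and cad: "cadlag_on {-1..} f" and tpos: "0 < t"
begin

lemma grid_strict: "0 < t - \<delta> \<Longrightarrow> i < j \<Longrightarrow> grid t \<delta> m i < grid t \<delta> m j"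
  unfolding grid_def by (simp add: divide_strict_right_mono)

lemma indep_first:
  assumes d: "0 < \<delta>" "\<delta> < t"
  shows "prob_space.indep_var M borel (\<lambda>\<omega>. W \<delta> \<omega> - W 0 \<omega>) borel
     (\<lambda>\<omega>. Min ((\<lambda>k. W (grid t \<delta> m k) \<omega> - W \<delta> \<omega> - f (grid t \<delta> m k)) ` {..2^m}))"
proof -
  interpret prob_space M by (rule P[OF BM mono cad tpos])
  define \<tau> where "\<tau> j = (if j = 0 then 0 else grid t \<delta> m (j - 1))" for j
  define N where "N = 2^m + (1::nat)"
  have g0: "grid t \<delta> m 0 = \<delta>" by (simp add: grid_def)
  have tau_inc: "\<tau> i < \<tau> j" if "i < j" for i j
  proof (cases "i = 0")
    case True
    have "\<delta> \<le> grid t \<delta> m (j - 1)"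
      using d grid_strict[of \<delta> 0 "j - 1" m] g0 by (cases "j - 1 = 0") auto
    then show ?thesis using True that d by (simp add: \<tau>_def)
  next
    case False
    then show ?thesis using that d grid_strict[of \<delta> "i - 1" "j - 1" m] by (simp add: \<tau>_def)
  qed
  have tau_nn: "0 \<le> \<tau> j" for j
    using tau_inc[of 0 j] by (cases "j = 0") (auto simp: \<tau>_def)
  define I where "I j \<omega> = W (\<tau> (Suc j)) \<omega> - W (\<tau> j) \<omega>" for j \<omega>
  define ts where "ts = map \<tau> [0..<Suc N]"
  have len: "length ts = Suc N" by (simp add: ts_def)
  have nth: "ts ! i = \<tau> i" if "i < Suc N" for i using that by (simp add: ts_def del: upt_Suc)
  have sorted: "sorted_wrt (<) ts"
    unfolding sorted_wrt_iff_nth_less len using nth tau_inc by auto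
  have nonneg: "\<forall>x\<in>set ts. 0 \<le> x" using tau_nn by (auto simp: ts_def)
  have ind0: "indep_vars (\<lambda>_. borel) (\<lambda>i \<omega>. W (ts ! Suc i) \<omega> - W (ts ! i) \<omega>) {..<length ts - 1}"
    by (rule Wi[OF BM mono cad tpos sorted nonneg])
  have ind: "indep_vars (\<lambda>_. borel) I {..<N}"
    using ind0 by (subst (asm) indep_vars_cong[where J="{..<N}" and Y=I and N'="\<lambda>_. borel"])
      (auto simp: len nth I_def fun_eq_iff)
  have ir: "indep_var (PiM {0} (\<lambda>_. borel)) (\<lambda>\<omega>. restrict (\<lambda>i. I i \<omega>) {0})
      (PiM {1..<N} (\<lambda>_. borel)) (\<lambda>\<omega>. restrict (\<lambda>i. I i \<omega>) {1..<N})"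
    by (rule indep_var_restrict[OF ind]) (auto simp: N_def)
  define \<Phi> where "\<Phi> x = Min ((\<lambda>k. (\<Sum>l<k. x (Suc l)) - f (grid t \<delta> m k)) ` {..2^m})" for x :: "nat \<Rightarrow> real"
  have m1: "(\<lambda>x. x 0) \<in> borel_measurable (PiM {0} (\<lambda>_. borel :: real measure))"
    by (rule measurable_component_singleton) simp
  have m2: "\<Phi> \<in> borel_measurable (PiM {1..<N} (\<lambda>_. borel :: real measure))"
    unfolding \<Phi>_def
    by (intro borel_measurable_Min borel_measurable_diff borel_measurable_sum
        measurable_component_singleton borel_measurable_const finite_atMost) (auto simp: N_def)
  have "indep_var borel ((\<lambda>x. x 0) \<circ> (\<lambda>\<omega>. restrict (\<lambda>i. I i \<omega>) {0}))
      borel (\<Phi> \<circ> (\<lambda>\<omega>. restrict (\<lambda>i. I i \<omega>) {1..<N}))"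
    by (rule indep_var_compose[OF ir m1 m2])
  also have "(\<lambda>x. x 0) \<circ> (\<lambda>\<omega>. restrict (\<lambda>i. I i \<omega>) {0}) = (\<lambda>\<omega>. W \<delta> \<omega> - W 0 \<omega>)"
    by (simp add: fun_eq_iff I_def \<tau>_def g0)
  also have "\<Phi> \<circ> (\<lambda>\<omega>. restrict (\<lambda>i. I i \<omega>) {1..<N}) =
      (\<lambda>\<omega>. Min ((\<lambda>k. W (grid t \<delta> m k) \<omega> - W \<delta> \<omega> - f (grid t \<delta> m k)) ` {..2^m}))"
  proof
    fix \<omega>
    have "(\<lambda>k. (\<Sum>l<k. restrict (\<lambda>i. I i \<omega>) {1..<N} (Suc l)) - f (grid t \<delta> m k)) ` {..2^m}
        = (\<lambda>k. W (grid t \<delta> m k) \<omega> - W \<delta> \<omega> - f (grid t \<delta> m k)) ` {..2^m}"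
    proof (rule image_cong[OF refl])
      fix k :: nat assume k: "k \<in> {..2^m}"
      have "(\<Sum>l<k. restrict (\<lambda>i. I i \<omega>) {1..<N} (Suc l)) = (\<Sum>l<k. W (grid t \<delta> m (Suc l)) \<omega> - W (grid t \<delta> m l) \<omega>)"
        using k by (intro sum.cong) (auto simp: N_def I_def \<tau>_def)
      also have "\<dots> = W (grid t \<delta> m k) \<omega> - W \<delta> \<omega>"
        by (subst sum_lessThan_telescope[where f="\<lambda>l. W (grid t \<delta> m l) \<omega>"]) (simp add: g0)
      finally show "(\<Sum>l<k. restrict (\<lambda>i. I i \<omega>) {1..<N} (Suc l)) - f (grid t \<delta> m k)
          = W (grid t \<delta> m k) \<omega> - W \<delta> \<omega> - f (grid t \<delta> m k)" by simp
    qed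
    then show "(\<Phi> \<circ> (\<lambda>\<omega>. restrict (\<lambda>i. I i \<omega>) {1..<N})) \<omega> =
      Min ((\<lambda>k. W (grid t \<delta> m k) \<omega> - W \<delta> \<omega> - f (grid t \<delta> m k)) ` {..2^m})"
      by (simp add: \<Phi>_def)
  qed
  finally show ?thesis .
qed

lemma small_ball:
  assumes d: "0 < \<delta>" "\<delta> < t" and e: "0 \<le> \<epsilon>"
  shows "measure M {\<omega>\<in>space M. \<bar>Ymin W f t \<delta> m \<omega>\<bar> \<le> \<epsilon>} \<le> 2 * \<epsilon> * (1 / sqrt \<delta>)"
proof -
  interpret prob_space M by (rule P[OF BM mono cad tpos])
  let ?Z = "\<lambda>\<omega>. Min ((\<lambda>k. W (grid t \<delta> m k) \<omega> - W \<delta> \<omega> - f (grid t \<delta> m k)) ` {..2^m})"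
  have D: "distributed M lborel (\<lambda>\<omega>. W \<delta> \<omega> - W 0 \<omega>) (\<lambda>x. ennreal (normal_density 0 (sqrt \<delta>) x))"
    using Wd[OF BM mono cad tpos, of 0 \<delta>] d by simp
  have eq: "Ymin W f t \<delta> m \<omega> = (W \<delta> \<omega> - W 0 \<omega>) + ?Z \<omega>" if "\<omega> \<in> space M" for \<omega>
  proof -
    have "(W \<delta> \<omega> - W 0 \<omega>) + ?Z \<omega> = Min ((+) (W \<delta> \<omega>) ` ((\<lambda>k. W (grid t \<delta> m k) \<omega> - W \<delta> \<omega> - f (grid t \<delta> m k)) ` {..2^m}))"
      using W0[OF BM mono cad tpos that] by (subst mono_Min_commute) (auto intro: monoI)
    also have "\<dots> = Ymin W f t \<delta> m \<omega>" unfolding Ymin_def image_image by simp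
    finally show ?thesis by simp
  qed
  have "emeasure M {\<omega>\<in>space M. \<bar>(W \<delta> \<omega> - W 0 \<omega>) + ?Z \<omega>\<bar> \<le> \<epsilon>} \<le> ennreal (2*\<epsilon>*(1 / sqrt \<delta>))"
    using d e by (intro lemG[OF prob_space_axioms indep_first[OF d] D] normal_density_le) auto
  then have "measure M {\<omega>\<in>space M. \<bar>(W \<delta> \<omega> - W 0 \<omega>) + ?Z \<omega>\<bar> \<le> \<epsilon>} \<le> 2*\<epsilon>*(1 / sqrt \<delta>)"
    using d e by (intro emeas_to_meas) (auto simp: finite_measure_axioms)
  moreover have "{\<omega>\<in>space M. \<bar>Ymin W f t \<delta> m \<omega>\<bar> \<le> \<epsilon>} = {\<omega>\<in>space M. \<bar>(W \<delta> \<omega> - W 0 \<omega>) + ?Z \<omega>\<bar> \<le> \<epsilon>}"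
    using eq by auto
  ultimately show ?thesis by simp
qed

end

context
  fixes M :: "'a measure" and W :: "real \<Rightarrow> 'a \<Rightarrow> real" and f :: "real \<Rightarrow> real" and t :: real
  assumes BM: "std_BM M W" and mono: "mono_on {-1..} f" and cad: "cadlag_on {-1..} f" and tpos: "0 < t"
begin

lemma Bnull:
  assumes d: "0 < \<delta>" "\<delta> < t"
  shows "{\<omega>\<in>space M. Finf W f t \<delta> \<omega> = 0} \<in> null_sets M"
proof -
  interpret prob_space M by (rule P[OF BM mono cad tpos])
  let ?B = "{\<omega>\<in>space M. Finf W f t \<delta> \<omega> = 0}"
  have Fm[measurable]: "Finf W f t \<delta> \<in> borel_measurable M" using F_meas[OF BM mono cad tpos] d by simp
  have Ym[measurable]: "\<And>m. Ymin W f t \<delta> m \<in> borel_measurable M" using Y_meas[OF BM mono cad tpos] d by simp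
  have Bs: "?B \<in> sets M" by measurable
  have bound: "measure M ?B \<le> 2 * \<epsilon> * (1 / sqrt \<delta>) + \<epsilon>" if e: "0 < \<epsilon>" for \<epsilon>
  proof -
    define C where "C m = {\<omega>\<in>space M. Finf W f t \<delta> \<omega> = 0 \<and> \<epsilon> < Ymin W f t \<delta> m \<omega>}" for m
    have Cs: "range C \<subseteq> sets M" unfolding C_def by auto
    have dec: "decseq C"
      unfolding decseq_def C_def using Y_mono[OF BM mono cad tpos] by (auto intro: less_le_trans)
    have emp: "(\<Inter>m. C m) = {}"
    proof (rule ccontr)
      assume "(\<Inter>m. C m) \<noteq> {}"
      then obtain \<omega> where w: "\<And>m. \<omega> \<in> C m" by auto
      then have ws: "\<omega> \<in> space M" and F0: "Finf W f t \<delta> \<omega> = 0" by (auto simp: C_def)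
      have "(\<lambda>m. Ymin W f t \<delta> m \<omega>) \<longlonglongrightarrow> 0"
        using Y_conv[OF BM mono cad tpos ws _ d(2)] d F0 by simp
      then obtain m where "\<bar>Ymin W f t \<delta> m \<omega>\<bar> < \<epsilon>" using e by (auto dest!: LIMSEQ_D)
      with w[of m] show False by (auto simp: C_def)
    qed
    have "(\<lambda>m. measure M (C m)) \<longlonglongrightarrow> measure M (\<Inter>m. C m)"
      by (rule finite_Lim_measure_decseq[OF Cs dec])
    then have "(\<lambda>m. measure M (C m)) \<longlonglongrightarrow> 0" by (simp add: emp)
    then obtain m where m: "measure M (C m) < \<epsilon>" using e by (auto dest!: LIMSEQ_D)
    have "?B \<subseteq> {\<omega>\<in>space M. \<bar>Ymin W f t \<delta> m \<omega>\<bar> \<le> \<epsilon>} \<union> C m"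
    proof
      fix \<omega> assume w: "\<omega> \<in> ?B"
      then have "0 \<le> Ymin W f t \<delta> m \<omega>" using Y_ge[OF BM mono cad tpos, of \<omega> \<delta> m] d by auto
      then show "\<omega> \<in> {\<omega>\<in>space M. \<bar>Ymin W f t \<delta> m \<omega>\<bar> \<le> \<epsilon>} \<union> C m" using w by (auto simp: C_def)
    qed
    then have "measure M ?B \<le> measure M ({\<omega>\<in>space M. \<bar>Ymin W f t \<delta> m \<omega>\<bar> \<le> \<epsilon>} \<union> C m)"
      using Cs by (intro finite_measure_mono) auto
    also have "\<dots> \<le> measure M {\<omega>\<in>space M. \<bar>Ymin W f t \<delta> m \<omega>\<bar> \<le> \<epsilon>} + measure M (C m)"
      using Cs by (intro measure_Un_le) auto
    also have "\<dots> \<le> 2 * \<epsilon> * (1 / sqrt \<delta>) + \<epsilon>"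
      using small_ball[OF BM mono cad tpos d, of \<epsilon> m] e m by simp
    finally show ?thesis .
  qed
  have "measure M ?B = 0"
  proof (rule ccontr)
    assume "measure M ?B \<noteq> 0"
    then have p: "0 < measure M ?B" using measure_nonneg[of M ?B] by linarith
    define c where "c = 2 * (1 / sqrt \<delta>) + 1"
    have c: "1 \<le> c" using d by (simp add: c_def)
    define \<epsilon> where "\<epsilon> = measure M ?B / (2 * c)"
    have e: "0 < \<epsilon>" using p c by (simp add: \<epsilon>_def)
    have "measure M ?B \<le> \<epsilon> * c" using bound[OF e] by (simp add: c_def algebra_simps)
    also have "\<dots> = measure M ?B / 2" using c by (simp add: \<epsilon>_def)
    finally show False using p by simp
  qed
  then show ?thesis using Bs by (simp add: null_sets_def emeasure_eq_measure)
qed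

end

theorem lemma4p5:
  fixes M :: "'a measure" and W :: "real \<Rightarrow> 'a \<Rightarrow> real" and f :: "real \<Rightarrow> real" and t :: real
  assumes "std_BM M W"
    and "mono_on {-1..} f"
    and "cadlag_on {-1..} f"
    and "t > 0"
  shows "{\<omega> \<in> space M. (INF s\<in>{0..t}. W s \<omega> - f s) = 0} \<in> null_sets M"
proof -
  note A = assms
  interpret prob_space M by (rule P[OF A])
  let ?A = "{\<omega> \<in> space M. (INF s\<in>{0..t}. W s \<omega> - f s) = 0}"
  let ?h = "\<lambda>\<omega> s. W s \<omega> - f s"
  have Aeq: "?A = {\<omega>\<in>space M. Finf W f t 0 \<omega> = 0}" by (simp add: Finf_def)
  have F0m[measurable]: "Finf W f t 0 \<in> borel_measurable M" using F_meas[OF A] assms(4) by simp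
  have As: "?A \<in> sets M" unfolding Aeq by measurable
  have dlt: "t / (real n + 2) < t" for n :: nat
  proof -
    have "t / (real n + 2) < t / 1" by (rule divide_strict_left_mono) (use assms(4) in auto)
    then show ?thesis by simp
  qed
  have F0le: "Finf W f t \<delta> \<omega> \<le> W s \<omega> - f s" if "\<omega> \<in> space M" "0 \<le> \<delta>" "s \<in> {\<delta>..t}" for \<omega> s \<delta>
    unfolding Finf_def using bdd[OF A that(1,2)] that(3) by (rule cINF_lower)
  consider "0 < f 0" | "f 0 = 0" | "f 0 < 0" by linarith
  then show ?thesis
  proof cases
    case 1
    have e: "?A = {}"
    proof safe
      fix \<omega> assume w: "\<omega> \<in> space M" "(INF s\<in>{0..t}. W s \<omega> - f s) = 0"
      have "Finf W f t 0 \<omega> \<le> W 0 \<omega> - f 0" using F0le[OF w(1), of 0 0] assms(4) by simp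
      then show "\<omega> \<in> {}" using w W0[OF A w(1)] 1 by (simp add: Finf_def)
    qed
    show ?thesis unfolding e by simp
  next
    case 2
    have sub: "?A \<subseteq> (\<Inter>j\<in>{..K}. {\<omega>\<in>space M. 0 \<le> W (t * r^(K-j)) \<omega>})" if r: "0 < r" "r < 1" for K r
    proof
      fix \<omega> assume w: "\<omega> \<in> ?A"
      then have ws: "\<omega> \<in> space M" and F0: "Finf W f t 0 \<omega> = 0" by (auto simp: Finf_def)
      show "\<omega> \<in> (\<Inter>j\<in>{..K}. {\<omega>\<in>space M. 0 \<le> W (t * r^(K-j)) \<omega>})"
      proof (intro InterI, clarsimp simp: ws)
        fix j :: nat
        let ?s = "t * r^(K-j)"
        have s0: "0 \<le> ?s" using r assms(4) by simp
        have "r^(K-j) \<le> 1" using r by (intro power_le_one) auto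
        then have s1: "?s \<le> t" using assms(4) by (simp add: mult_left_le)
        have "f 0 \<le> f ?s" using s0 by (intro mono_onD[OF assms(2)]) auto
        moreover have "0 \<le> W ?s \<omega> - f ?s" using F0le[OF ws, of 0 ?s] s0 s1 F0 by simp
        ultimately show "0 \<le> W ?s \<omega>" using 2 by simp
      qed
    qed
    have le: "measure M ?A \<le> (3/4)^K + K * (16 * r / (1 - r))" if "0 < K" "0 < r" "r < 1" for K r
    proof -
      have "measure M ?A \<le> measure M (\<Inter>j\<in>{..K}. {\<omega>\<in>space M. 0 \<le> W (t * r^(K-j)) \<omega>})"
      proof (rule finite_measure_mono[OF sub[OF that(2,3)]])
        have "\<And>j. W (t * r^(K-j)) \<in> borel_measurable M"
          using that assms(4) by (intro Wm[OF A]) simp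
        then show "(\<Inter>j\<in>{..K}. {\<omega>\<in>space M. 0 \<le> W (t * r^(K-j)) \<omega>}) \<in> sets M"
          by (intro sets.finite_INT) auto
      qed
      also have "\<dots> \<le> (3/4)^K + K * (16 * r / (1 - r))" by (rule chain[OF A that])
      finally show ?thesis .
    qed
    have "measure M ?A = 0"
    proof (rule ccontr)
      assume "measure M ?A \<noteq> 0"
      then have p: "0 < measure M ?A" using measure_nonneg[of M ?A] by linarith
      define p where "p = measure M ?A"
      obtain K0 where K0: "(3/4::real)^K0 < p/2" using real_arch_pow_inv[of "p/2" "3/4"] p by (auto simp: p_def)
      define K where "K = Suc K0"
      have "(3/4::real)^K \<le> (3/4)^K0" unfolding K_def by (intro power_decreasing) auto
      then have K1: "(3/4::real)^K < p/2" using K0 by linarith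
      define r where "r = min (1/2) (p / (64 * (real K + 1)))"
      have r0: "0 < r" using p by (simp add: r_def p_def)
      have r1: "r \<le> 1/2" unfolding r_def by (rule min.cobounded1)
      have r2: "r \<le> p / (64 * (real K + 1))" unfolding r_def by (rule min.cobounded2)
      have "16 * r / (1 - r) \<le> 16 * r / (1/2)"
        using r0 r1 by (intro divide_left_mono) auto
      then have "real K * (16 * r / (1 - r)) \<le> real K * (32 * r)" by (intro mult_left_mono) auto
      also have "\<dots> \<le> real K * (32 * (p / (64 * (real K + 1))))" using r2 by (intro mult_left_mono) auto
      also have "\<dots> = p / 2 * (real K / (real K + 1))" by (simp add: field_simps)
      also have "\<dots> < p / 2 * 1"
      proof (rule mult_strict_left_mono)
        show "real K / (real K + 1) < 1" by simp
        show "0 < p / 2" using p by (simp add: p_def)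
      qed
      also have "\<dots> = p / 2" by simp
      finally have K2: "real K * (16 * r / (1 - r)) < p / 2" .
      have "p \<le> (3/4)^K + K * (16 * r / (1 - r))" unfolding p_def
        using r0 r1 by (intro le) (auto simp: K_def)
      then show False using K1 K2 by simp
    qed
    then show ?thesis using As by (simp add: null_sets_def emeasure_eq_measure)
  next
    case 3
    have sub: "?A \<subseteq> (\<Union>n::nat. {\<omega>\<in>space M. Finf W f t (t / (real n + 2)) \<omega> = 0})"
    proof
      fix \<omega> assume w: "\<omega> \<in> ?A"
      then have ws: "\<omega> \<in> space M" and F0: "Finf W f t 0 \<omega> = 0" by (auto simp: Finf_def)
      define c where "c = - f 0 / 2"
      have c: "0 < c" using 3 by (simp add: c_def)
      have h0: "?h \<omega> 0 = 2 * c" using W0[OF A ws] by (simp add: c_def)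
      have "((\<lambda>u. ?h \<omega> u) \<longlongrightarrow> ?h \<omega> 0) (at_right 0)" by (rule rc[OF A ws]) simp
      then have "\<forall>\<^sub>F u in at_right 0. dist (?h \<omega> u) (?h \<omega> 0) < c" by (rule tendstoD) (use c in simp)
      then obtain b where b: "b > 0" "\<And>u. u > 0 \<Longrightarrow> u < b \<Longrightarrow> dist (?h \<omega> u) (?h \<omega> 0) < c"
        unfolding eventually_at_right_field by blast
      have hb: "c < ?h \<omega> u" if "0 < u" "u < b" for u
        using b(2)[OF that] h0 unfolding dist_real_def abs_less_iff by linarith
      obtain n :: nat where n: "t / b < real n" using reals_Archimedean2 by blast
      define \<delta> where "\<delta> = t / (real n + 2)"
      have d0: "0 < \<delta>" using assms(4) by (simp add: \<delta>_def)
      have d1: "\<delta> < t" unfolding \<delta>_def by (rule dlt)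
      have "t < b * real n" using n b(1) by (simp add: pos_divide_less_eq mult.commute)
      then have "t < b * (real n + 2)" using b(1) by (smt (verit) mult_left_mono of_nat_0_le_iff)
      then have d2: "\<delta> < b" unfolding \<delta>_def by (simp add: pos_divide_less_eq mult.commute)
      have ge: "0 \<le> Finf W f t \<delta> \<omega>"
        unfolding Finf_def using d1 F0le[OF ws, of 0] d0 F0 by (intro cINF_greatest) auto
      have le: "\<not> 0 < Finf W f t \<delta> \<omega>"
      proof
        assume dpos: "0 < Finf W f t \<delta> \<omega>"
        define d where "d = Finf W f t \<delta> \<omega>"
        have "min c d \<le> ?h \<omega> s" if s: "s \<in> {0..t}" for s
        proof (cases "s < \<delta>")
          case True
          show ?thesis
          proof (cases "s = 0")
            case True then show ?thesis using h0 c by simp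
          next
            case False
            then have "c < ?h \<omega> s" using s True d2 by (intro hb) auto
            then show ?thesis by simp
          qed
        next
          case False
          then have "d \<le> ?h \<omega> s" unfolding d_def using s d0 by (intro F0le[OF ws]) auto
          then show ?thesis by simp
        qed
        then have "min c d \<le> Finf W f t 0 \<omega>" unfolding Finf_def using assms(4)
          by (intro cINF_greatest) auto
        then show False using F0 c dpos by (simp add: d_def)
      qed
      have "Finf W f t \<delta> \<omega> = 0" using ge le by simp
      then show "\<omega> \<in> (\<Union>n::nat. {\<omega>\<in>space M. Finf W f t (t / (real n + 2)) \<omega> = 0})"
        using ws by (auto simp: \<delta>_def)
    qed
    have "(\<Union>n::nat. {\<omega>\<in>space M. Finf W f t (t / (real n + 2)) \<omega> = 0}) \<in> null_sets M"
    proof (intro null_sets_UN Bnull[OF A])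
      fix n :: nat
      show "0 < t / (real n + 2)" using assms(4) by simp
      show "t / (real n + 2) < t" by (rule dlt)
    qed
    then show ?thesis using null_sets_subset As sub by blast
  qed
qed

end
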